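(* Let $V=\{v_1,\dots,v_m\}\subset\mathbb{R}^d$ be a finite set of points and $r\in\mathbb{R}^d$. Let $\mathcal{B}(V,r)$ be the poset, ordered by inclusion, of all weakly $r$-balanced subsets $S\subset V$ with $S\neq V$, and let $\overline{\mathcal{B}}(V,r)$ be the poset, ordered by inclusion, of all $r$-balanced subsets $S\subset V$ with $S\neq V$. Then the order complexes are homotopy equivalent: $\Delta\mathcal{B}(V,r)\simeq\Delta\overline{\mathcal{B}}(V,r)$.
   Context: A subset $S\subset V$ is called weakly $r$-balanced if $r\in\mathrm{conv}(S)$, and $r$-balanced if $r\in\mathrm{relint}(\mathrm{conv}(S))$ (relative interior taken within the affine hull of $S$). For a poset $\mathcal{P}$, $\Delta\mathcal{P}$ denotes its order complex. *)

theory Defs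
  imports "HOL-Analysis.Analysis"
begin

definition weakly_balanced :: "'a::euclidean_space \<Rightarrow> 'a set \<Rightarrow> bool" where
  "weakly_balanced r S \<longleftrightarrow> r \<in> convex hull S"

definition balanced_set :: "'a::euclidean_space \<Rightarrow> 'a set \<Rightarrow> bool" where
  "balanced_set r S \<longleftrightarrow> r \<in> rel_interior (convex hull S)"

definition weak_balanced_poset :: "'a::euclidean_space set \<Rightarrow> 'a \<Rightarrow> 'a set set" where
  "weak_balanced_poset V r = {S. S \<subseteq> V \<and> S \<noteq> V \<and> weakly_balanced r S}"

definition balanced_poset :: "'a::euclidean_space set \<Rightarrow> 'a \<Rightarrow> 'a set set" where
  "balanced_poset V r = {S. S \<subseteq> V \<and> S \<noteq> V \<and> balanced_set r S}"

definition order_complex :: "'b set set \<Rightarrow> 'b set set set" where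
  "order_complex P = {c. c \<subseteq> P \<and> c \<noteq> {} \<and> finite c \<and>
                         (\<forall>x\<in>c. \<forall>y\<in>c. x \<subseteq> y \<or> y \<subseteq> x)}"

text \<open>Geometric realization of an abstract simplicial complex K on a finite vertex
  set P: the points are functions (barycentric coordinates) P \<rightarrow> [0,1] summing to 1
  whose support is a simplex of K, with the topology inherited from the product
  topology on P \<rightarrow> real (i.e. the Euclidean topology of R^P).\<close>
definition geometric_realization :: "'c set \<Rightarrow> 'c set set \<Rightarrow> ('c \<Rightarrow> real) topology" where
  "geometric_realization P K =
     subtopology (powertop_real P)
       {f \<in> extensional P. (\<forall>x\<in>P. 0 \<le> f x) \<and> sum f P = 1 \<and> {x\<in>P. f x \<noteq> 0} \<in> K}"

definition order_complex_space :: "'b set set \<Rightarrow> ('b set \<Rightarrow> real) topology" where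
  "order_complex_space P = geometric_realization P (order_complex P)"

end

theory Submission
  imports Defs
begin


lemma topspace_ocs:
  "topspace (order_complex_space P) = {g \<in> extensional P. (\<forall>x\<in>P. 0 \<le> g x) \<and> sum g P = 1 \<and> {x\<in>P. g x \<noteq> 0} \<in> order_complex P}"
  unfolding order_complex_space_def geometric_realization_def
  by (auto simp: topspace_subtopology PiE_def)

lemma ocs_proj:
  assumes "k \<in> P" shows "continuous_map (order_complex_space P) euclideanreal (\<lambda>g. g k)"
  unfolding order_complex_space_def geometric_realization_def
  using assms by (intro continuous_map_from_subtopology) (metis continuous_map_product_projection)

lemma ocs_proj2:
  assumes "k \<in> P" shows "continuous_map (prod_topology Z (order_complex_space P)) euclideanreal (\<lambda>z. snd z k)"
  using continuous_map_compose[OF continuous_map_snd ocs_proj[OF assms]] by (simp add: o_def)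

lemma ocs_into:
  assumes "\<And>k. k \<in> P \<Longrightarrow> continuous_map Z euclideanreal (\<lambda>z. h z k)"
   and "\<And>z. z \<in> topspace Z \<Longrightarrow> h z \<in> topspace (order_complex_space P)"
  shows "continuous_map Z (order_complex_space P) h"
  unfolding order_complex_space_def geometric_realization_def continuous_map_in_subtopology
  using assms(2) unfolding topspace_ocs
  by (auto simp: continuous_map_componentwise assms(1))



definition GS :: "'b set set \<Rightarrow> ('b set \<Rightarrow> real) \<Rightarrow> 'b set \<Rightarrow> real" where
  "GS P g S = (\<Sum>T\<in>{T\<in>P. T \<subseteq> S}. g T)"
definition LS :: "'b set set \<Rightarrow> ('b set \<Rightarrow> real) \<Rightarrow> 'b set \<Rightarrow> real" where
  "LS P g S = (\<Sum>T\<in>{T\<in>P. T \<subset> S}. g T)"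

lemma GS_LS: assumes "finite P" "S \<in> P" shows "GS P g S = g S + LS P g S"
proof -
  have "{T\<in>P. T \<subseteq> S} = insert S {T\<in>P. T \<subset> S}" using assms by auto
  then show ?thesis unfolding GS_def LS_def using assms by (simp add: sum.insert)
qed

lemma LS_nonneg: assumes "\<forall>x\<in>P. 0 \<le> g x" shows "0 \<le> LS P g S"
  unfolding LS_def using assms by (auto intro: sum_nonneg)

lemma GS_le1: assumes "finite P" "\<forall>x\<in>P. 0 \<le> g x" "sum g P = 1" shows "GS P g S \<le> 1"
  unfolding GS_def using assms using sum_mono2[of P "{T\<in>P. T \<subseteq> S}" g] by auto

lemma GS_le_LS: assumes "finite P" "\<forall>x\<in>P. 0 \<le> g x" "Q \<subset> S" shows "GS P g Q \<le> LS P g S"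
  unfolding GS_def LS_def using assms by (intro sum_mono2) auto

lemma cont_GS: assumes "finite P"
  shows "continuous_map (prod_topology Z (order_complex_space P)) euclideanreal (\<lambda>z. GS P (snd z) S)"
  unfolding GS_def using assms by (intro continuous_map_sum ocs_proj2) auto

lemma cont_LS: assumes "finite P"
  shows "continuous_map (prod_topology Z (order_complex_space P)) euclideanreal (\<lambda>z. LS P (snd z) S)"
  unfolding LS_def using assms by (intro continuous_map_sum ocs_proj2) auto

lemma split_len: "(a::real) \<le> b \<Longrightarrow> max 0 (b - max a t) + max 0 (min b t - a) = b - a"
  by (auto simp: max_def min_def)



lemma oc_intro:
  assumes "Z \<subseteq> A" "finite A" "Z \<subseteq> P" "Z \<noteq> {}" "\<forall>x\<in>A. \<forall>y\<in>A. x \<subseteq> y \<or> y \<subseteq> x"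
  shows "Z \<in> order_complex P"
proof -
  have "finite Z" using assms finite_subset by blast
  moreover have "\<forall>x\<in>Z. \<forall>y\<in>Z. x \<subseteq> y \<or> y \<subseteq> x" using assms(1,5) by blast
  ultimately show ?thesis using assms unfolding order_complex_def by blast
qed

lemma supp_ne: assumes "sum h P = (1::real)" shows "{x\<in>P. h x \<noteq> 0} \<noteq> {}"
  using assms by (metis (mono_tags, lifting) empty_Collect_eq sum.neutral zero_neq_one)

lemma oc_D: assumes "c \<in> order_complex P"
  shows "c \<subseteq> P" "finite c" "\<And>x y. x \<in> c \<Longrightarrow> y \<in> c \<Longrightarrow> x \<subseteq> y \<or> y \<subseteq> x"
  using assms unfolding order_complex_def by auto

context
  fixes P Q :: "'b set set" and f :: "'b set \<Rightarrow> 'b set"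
  assumes fin: "finite P" and QP: "Q \<subseteq> P" and fQ: "\<And>S. S\<in>P \<Longrightarrow> f S \<in> Q"
   and fsub: "\<And>S. S\<in>P \<Longrightarrow> f S \<subseteq> S"
   and fmono: "\<And>S T. S\<in>P \<Longrightarrow> T\<in>P \<Longrightarrow> S \<subseteq> T \<Longrightarrow> f S \<subseteq> f T"
   and fid: "\<And>S. S\<in>Q \<Longrightarrow> f S = S"
begin

definition "pm g = restrict (\<lambda>R. \<Sum>S\<in>{S\<in>P. f S = R}. g S) Q"

definition "im g = restrict (\<lambda>S. if S \<in> Q then g S else 0) P"

definition "Hm z = restrict (\<lambda>R. max 0 (GS P (snd z) R - max (LS P (snd z) R) (fst z))
   + (\<Sum>S\<in>{S\<in>P. f S = R}. max 0 (min (GS P (snd z) S) (fst z) - LS P (snd z) S))) P"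

lemma finQ: "finite Q" using fin QP finite_subset by blast

lemma fibre_sum: "(\<Sum>R\<in>Q. \<Sum>S\<in>{S\<in>P. f S = R}. h S) = sum h P"
  using sum.group[OF fin finQ, of f h] fQ by blast

lemma fibre_sumP: "(\<Sum>R\<in>P. \<Sum>S\<in>{S\<in>P. f S = R}. h S) = sum h P"
  using sum.group[OF fin fin, of f h] fQ QP by blast

lemma pm_top: assumes g: "g \<in> topspace (order_complex_space P)"
  shows "pm g \<in> topspace (order_complex_space Q)"
proof -
  let ?c = "{x\<in>P. g x \<noteq> 0}"
  have e: "g \<in> extensional P" and nn: "\<forall>x\<in>P. 0 \<le> g x" and s: "sum g P = 1" and c: "?c \<in> order_complex P"
    using g unfolding topspace_ocs by auto
  have s2: "sum (pm g) Q = 1" unfolding pm_def using fibre_sum[of g] s by simp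
  have "{x\<in>Q. pm g x \<noteq> 0} \<in> order_complex Q"
  proof (rule oc_intro[where A="f ` ?c"])
    show "{x\<in>Q. pm g x \<noteq> 0} \<subseteq> f ` ?c"
    proof
      fix x assume x: "x \<in> {x\<in>Q. pm g x \<noteq> 0}"
      then have "(\<Sum>S\<in>{S\<in>P. f S = x}. g S) \<noteq> 0" unfolding pm_def by auto
      then obtain S where "S \<in> P" "f S = x" "g S \<noteq> 0" using sum.neutral[of "{S\<in>P. f S = x}" g] by blast
      then show "x \<in> f ` ?c" by auto
    qed
    show "finite (f ` ?c)" using fin by simp
    show "{x\<in>Q. pm g x \<noteq> 0} \<subseteq> Q" by auto
    show "{x\<in>Q. pm g x \<noteq> 0} \<noteq> {}" using supp_ne[OF s2] .
    show "\<forall>x\<in>f ` ?c. \<forall>y\<in>f ` ?c. x \<subseteq> y \<or> y \<subseteq> x"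
      using oc_D(3)[OF c] fmono by (smt (verit, ccfv_threshold) imageE mem_Collect_eq)
  qed
  moreover have "\<forall>x\<in>Q. 0 \<le> pm g x" unfolding pm_def using nn by (auto intro: sum_nonneg)
  moreover have "pm g \<in> extensional Q" unfolding pm_def by simp
  ultimately show ?thesis unfolding topspace_ocs mem_Collect_eq using s2 by blast
qed

lemma im_top: assumes g: "g \<in> topspace (order_complex_space Q)"
  shows "im g \<in> topspace (order_complex_space P)"
proof -
  have e: "g \<in> extensional Q" and nn: "\<forall>x\<in>Q. 0 \<le> g x" and s: "sum g Q = 1" and c: "{x\<in>Q. g x \<noteq> 0} \<in> order_complex Q"
    using g unfolding topspace_ocs by auto
  have "sum (im g) P = sum (im g) Q" using QP fin unfolding im_def by (intro sum.mono_neutral_right) auto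
  also have "\<dots> = 1" using s QP unfolding im_def by (simp add: subset_iff)
  finally have s1: "sum (im g) P = 1" .
  moreover have "{x\<in>P. im g x \<noteq> 0} \<in> order_complex P"
  proof -
    have "{x\<in>P. im g x \<noteq> 0} = {x\<in>Q. g x \<noteq> 0}" using QP unfolding im_def by auto
    moreover have "order_complex Q \<subseteq> order_complex P" using QP unfolding order_complex_def by auto
    ultimately show ?thesis using c by auto
  qed
  moreover have "im g \<in> extensional P" unfolding im_def by simp
  moreover have "\<forall>x\<in>P. 0 \<le> im g x" using nn unfolding im_def by auto
  ultimately show ?thesis unfolding topspace_ocs mem_Collect_eq by blast
qed


lemma Hm_val: "R \<in> P \<Longrightarrow> Hm z R = max 0 (GS P (snd z) R - max (LS P (snd z) R) (fst z))
   + (\<Sum>S\<in>{S\<in>P. f S = R}. max 0 (min (GS P (snd z) S) (fst z) - LS P (snd z) S))"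
  by (simp add: Hm_def)

lemma Hm_top: assumes g: "g \<in> topspace (order_complex_space P)"
  shows "Hm (t,g) \<in> topspace (order_complex_space P)"
proof -
  let ?c = "{x\<in>P. g x \<noteq> 0}"
  have e: "g \<in> extensional P" and nn: "\<forall>x\<in>P. 0 \<le> g x" and s: "sum g P = 1" and c: "?c \<in> order_complex P"
    using g unfolding topspace_ocs by auto
  define A where "A R = max 0 (GS P g R - max (LS P g R) t)" for R
  define B where "B S = max 0 (min (GS P g S) t - LS P g S)" for S
  have HR: "\<And>R. R \<in> P \<Longrightarrow> Hm (t,g) R = A R + (\<Sum>S\<in>{S\<in>P. f S = R}. B S)"
    by (simp add: Hm_val A_def B_def)
  have GL: "\<And>R. R \<in> P \<Longrightarrow> GS P g R = g R + LS P g R" using GS_LS fin by blast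
  have AB: "\<And>R. R \<in> P \<Longrightarrow> A R + B R = g R"
  proof -
    fix R assume R: "R \<in> P"
    have "LS P g R \<le> GS P g R" using GL[OF R] nn R by auto
    then show "A R + B R = g R" unfolding A_def B_def using split_len GL[OF R] by simp
  qed
  have "sum (Hm (t,g)) P = (\<Sum>R\<in>P. A R + (\<Sum>S\<in>{S\<in>P. f S = R}. B S))" using HR by simp
  also have "\<dots> = sum A P + sum B P" by (simp add: sum.distrib fibre_sumP)
  also have "\<dots> = sum g P" by (simp add: AB flip: sum.distrib)
  finally have s1: "sum (Hm (t,g)) P = 1" using s by simp
  have nn1: "\<forall>x\<in>P. 0 \<le> Hm (t,g) x" using HR unfolding A_def B_def by (auto intro!: add_nonneg_nonneg sum_nonneg)
  let ?A = "{R\<in>?c. t < GS P g R} \<union> f ` {S\<in>?c. LS P g S < t}"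
  have "{x\<in>P. Hm (t,g) x \<noteq> 0} \<in> order_complex P"
  proof (rule oc_intro[where A="?A"])
    show "{x\<in>P. Hm (t,g) x \<noteq> 0} \<subseteq> ?A"
    proof
      fix R assume R: "R \<in> {x\<in>P. Hm (t,g) x \<noteq> 0}"
      then have RP: "R \<in> P" by auto
      have "A R \<noteq> 0 \<or> (\<Sum>S\<in>{S\<in>P. f S = R}. B S) \<noteq> 0" using R HR by auto
      then show "R \<in> ?A"
      proof
        assume "A R \<noteq> 0"
        then have "GS P g R > LS P g R" "GS P g R > t" unfolding A_def by (auto simp: max_def split: if_splits)
        then show ?thesis using GL[OF RP] RP by auto
      next
        assume "(\<Sum>S\<in>{S\<in>P. f S = R}. B S) \<noteq> 0"
        then obtain S where S: "S \<in> P" "f S = R" "B S \<noteq> 0" using sum.neutral[of "{S\<in>P. f S = R}" B] by blast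
        then have "GS P g S > LS P g S" "LS P g S < t" unfolding B_def by (auto simp: max_def min_def split: if_splits)
        then show ?thesis using GL[OF S(1)] S by auto
      qed
    qed
    show "finite ?A" using fin by simp
    show "{x\<in>P. Hm (t,g) x \<noteq> 0} \<subseteq> P" by auto
    show "{x\<in>P. Hm (t,g) x \<noteq> 0} \<noteq> {}" using supp_ne[OF s1] .
    have mixed: "f S \<subseteq> R \<or> R \<subseteq> f S" if "R \<in> ?c" "t < GS P g R" "S \<in> ?c" "LS P g S < t" for R S
    proof -
      have "S \<subseteq> R \<or> R \<subseteq> S" using oc_D(3)[OF c] that by blast
      then show ?thesis
      proof
        assume "S \<subseteq> R" then show ?thesis using fsub that by blast
      next
        assume RS: "R \<subseteq> S"
        show ?thesis
        proof (cases "R = S")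
          case True then show ?thesis using fsub that by blast
        next
          case False
          then have "R \<subset> S" using RS by auto
          then have "GS P g R \<le> LS P g S" using GS_le_LS fin nn by blast
          then show ?thesis using that by auto
        qed
      qed
    qed
    show "\<forall>x\<in>?A. \<forall>y\<in>?A. x \<subseteq> y \<or> y \<subseteq> x"
    proof (intro ballI)
      fix x y assume x: "x \<in> ?A" and y: "y \<in> ?A"
      show "x \<subseteq> y \<or> y \<subseteq> x"
        using x y
      proof (elim UnE)
        assume "x \<in> {R\<in>?c. t < GS P g R}" "y \<in> {R\<in>?c. t < GS P g R}"
        then show ?thesis using oc_D(3)[OF c] by blast
      next
        assume "x \<in> {R\<in>?c. t < GS P g R}" "y \<in> f ` {S\<in>?c. LS P g S < t}"
        then show ?thesis using mixed by blast
      next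
        assume "y \<in> {R\<in>?c. t < GS P g R}" "x \<in> f ` {S\<in>?c. LS P g S < t}"
        then show ?thesis using mixed by blast
      next
        assume "x \<in> f ` {S\<in>?c. LS P g S < t}" "y \<in> f ` {S\<in>?c. LS P g S < t}"
        then obtain S1 S2 where "S1 \<in> ?c" "S2 \<in> ?c" "x = f S1" "y = f S2" by auto
        then show ?thesis using oc_D(3)[OF c] fmono by (metis (no_types, lifting) mem_Collect_eq)
      qed
    qed
  qed
  moreover have "Hm (t,g) \<in> extensional P" unfolding Hm_def by simp
  ultimately show ?thesis unfolding topspace_ocs mem_Collect_eq using s1 nn1 by blast
qed

lemma Hm0: assumes g: "g \<in> topspace (order_complex_space P)" shows "Hm (0,g) = g"
proof (rule extensionalityI[of _ P])
  have e: "g \<in> extensional P" and nn: "\<forall>x\<in>P. 0 \<le> g x"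
    using g unfolding topspace_ocs by auto
  show "Hm (0, g) \<in> extensional P" unfolding Hm_def by simp
  show "g \<in> extensional P" by fact
  fix R assume R: "R \<in> P"
  have GL: "\<And>R. R \<in> P \<Longrightarrow> GS P g R = g R + LS P g R" using GS_LS fin by blast
  have L0: "\<And>R. 0 \<le> LS P g R" using LS_nonneg nn by blast
  have "\<And>S. S \<in> P \<Longrightarrow> max 0 (min (GS P g S) 0 - LS P g S) = 0"
    using GL L0 nn by (smt (verit))
  then have "(\<Sum>S\<in>{S\<in>P. f S = R}. max 0 (min (GS P g S) 0 - LS P g S)) = 0" by (intro sum.neutral) auto
  moreover have "max 0 (GS P g R - max (LS P g R) 0) = g R" using GL[OF R] L0[of R] nn R by auto
  ultimately show "Hm (0, g) R = g R" using R by (simp add: Hm_val)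
qed

lemma Hm1: assumes g: "g \<in> topspace (order_complex_space P)" shows "Hm (1,g) = im (pm g)"
proof (rule extensionalityI[of _ P])
  have e: "g \<in> extensional P" and nn: "\<forall>x\<in>P. 0 \<le> g x" and s: "sum g P = 1"
    using g unfolding topspace_ocs by auto
  show "Hm (1, g) \<in> extensional P" unfolding Hm_def by simp
  show "im (pm g) \<in> extensional P" unfolding im_def by simp
  fix R assume R: "R \<in> P"
  have GL: "\<And>R. R \<in> P \<Longrightarrow> GS P g R = g R + LS P g R" using GS_LS fin by blast
  have L0: "\<And>R. 0 \<le> LS P g R" using LS_nonneg nn by blast
  have G1: "\<And>R. GS P g R \<le> 1" using GS_le1 fin nn s by blast
  have "\<And>S. S \<in> P \<Longrightarrow> max 0 (min (GS P g S) 1 - LS P g S) = g S"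
    using GL L0 nn G1 by (smt (verit))
  then have "(\<Sum>S\<in>{S\<in>P. f S = R}. max 0 (min (GS P g S) 1 - LS P g S)) = (\<Sum>S\<in>{S\<in>P. f S = R}. g S)"
    by (intro sum.cong) auto
  moreover have "max 0 (GS P g R - max (LS P g R) 1) = 0" using G1[of R] by auto
  moreover have "R \<notin> Q \<Longrightarrow> (\<Sum>S\<in>{S\<in>P. f S = R}. g S) = 0"
  proof -
    assume "R \<notin> Q" then have "{S\<in>P. f S = R} = {}" using fQ by auto
    then show ?thesis by (metis sum.empty)
  qed
  ultimately show "Hm (1, g) R = im (pm g) R" using R by (auto simp add: Hm_val im_def pm_def)
qed

lemma pm_im: assumes g: "g \<in> topspace (order_complex_space Q)" shows "pm (im g) = g"
proof (rule extensionalityI[of _ Q])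
  show "pm (im g) \<in> extensional Q" unfolding pm_def by simp
  show "g \<in> extensional Q" using g unfolding topspace_ocs by auto
  fix R assume R: "R \<in> Q"
  have "(\<Sum>S\<in>{S\<in>P. f S = R}. im g S) = (\<Sum>S\<in>{S\<in>P. f S = R}. if S = R then g R else 0)"
    using fid R unfolding im_def by (intro sum.cong) auto
  also have "\<dots> = g R" using R QP fid fin by (subst sum.delta) auto
  finally show "pm (im g) R = g R" using R unfolding pm_def by simp
qed

lemma cont_fst01: "continuous_map (prod_topology (subtopology euclideanreal S) X) euclideanreal fst"
  using continuous_map_compose[OF continuous_map_fst continuous_map_from_subtopology[OF continuous_map_id]]
  by (simp add: o_def)

lemma cont_pm: "continuous_map (order_complex_space P) (order_complex_space Q) pm"
proof (rule ocs_into)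
  fix k assume k: "k \<in> Q"
  have "(\<lambda>g::'b set \<Rightarrow> real. pm g k) = (\<lambda>g. \<Sum>S\<in>{S\<in>P. f S = k}. g S)" using k by (simp add: pm_def fun_eq_iff)
  moreover have "continuous_map (order_complex_space P) euclideanreal (\<lambda>g. \<Sum>S\<in>{S\<in>P. f S = k}. g S)"
    using fin by (intro continuous_map_sum ocs_proj) auto
  ultimately show "continuous_map (order_complex_space P) euclideanreal (\<lambda>g. pm g k)" by (simp only:)
qed (rule pm_top)

lemma cont_im: "continuous_map (order_complex_space Q) (order_complex_space P) im"
proof (rule ocs_into)
  fix k assume k: "k \<in> P"
  have "(\<lambda>g::'b set \<Rightarrow> real. im g k) = (\<lambda>g. if k \<in> Q then g k else 0)" using k by (simp add: im_def fun_eq_iff)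
  moreover have "continuous_map (order_complex_space Q) euclideanreal (\<lambda>g. if k \<in> Q then g k else 0)"
    by (cases "k \<in> Q") (auto intro: ocs_proj)
  ultimately show "continuous_map (order_complex_space Q) euclideanreal (\<lambda>g. im g k)" by (simp only:)
qed (rule im_top)

lemma cont_Hm: "continuous_map (prod_topology (subtopology euclideanreal {0..1}) (order_complex_space P)) (order_complex_space P) Hm"
proof (rule ocs_into)
  fix k assume k: "k \<in> P"
  have "(\<lambda>z. Hm z k) = (\<lambda>z. max 0 (GS P (snd z) k - max (LS P (snd z) k) (fst z))
   + (\<Sum>S\<in>{S\<in>P. f S = k}. max 0 (min (GS P (snd z) S) (fst z) - LS P (snd z) S)))"
    using k by (simp add: Hm_val fun_eq_iff)
  moreover have "continuous_map (prod_topology (subtopology euclideanreal {0..1}) (order_complex_space P)) euclideanreal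
     (\<lambda>z. max 0 (GS P (snd z) k - max (LS P (snd z) k) (fst z))
   + (\<Sum>S\<in>{S\<in>P. f S = k}. max 0 (min (GS P (snd z) S) (fst z) - LS P (snd z) S)))"
    using fin by (intro continuous_map_add continuous_map_real_max continuous_map_const[THEN iffD2] continuous_map_diff
        continuous_map_real_min continuous_map_sum cont_GS cont_LS cont_fst01) auto
  ultimately show "continuous_map (prod_topology (subtopology euclideanreal {0..1}) (order_complex_space P)) euclideanreal (\<lambda>z. Hm z k)" by (simp only:)
next
  fix z assume "z \<in> topspace (prod_topology (subtopology euclideanreal {0..1}) (order_complex_space P))"
  then have "snd z \<in> topspace (order_complex_space P)" by auto
  then show "Hm z \<in> topspace (order_complex_space P)" using Hm_top[of "snd z" "fst z"] by simp
qed

theorem retract_hequiv: "order_complex_space P homotopy_equivalent_space order_complex_space Q"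
  unfolding homotopy_equivalent_space_def
proof (intro exI conjI)
  show "continuous_map (order_complex_space P) (order_complex_space Q) pm" by (rule cont_pm)
  show "continuous_map (order_complex_space Q) (order_complex_space P) im" by (rule cont_im)
  have "homotopic_with (\<lambda>x. True) (order_complex_space P) (order_complex_space P) id (im \<circ> pm)"
    by (subst homotopic_with) (auto intro!: exI[of _ Hm] simp: Hm0 Hm1 cont_Hm)
  then show "homotopic_with (\<lambda>x. True) (order_complex_space P) (order_complex_space P) (im \<circ> pm) id"
    by (rule homotopic_with_symD)
  show "homotopic_with (\<lambda>x. True) (order_complex_space Q) (order_complex_space Q) (pm \<circ> im) id"
    by (rule homotopic_with_equal) (auto simp: pm_im intro: continuous_map_compose cont_pm cont_im)
qed

end


lemma exists_face_relint:
  fixes C :: "'a::euclidean_space set"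
  assumes "polytope C" "x \<in> C" shows "\<exists>F. F face_of C \<and> x \<in> rel_interior F"
  using assms
proof (induction "nat (aff_dim C)" arbitrary: C rule: less_induct)
  case less
  show ?case
  proof (cases "x \<in> rel_interior C")
    case True
    then show ?thesis using face_of_refl polytope_imp_convex less.prems by blast
  next
    case False
    then have "x \<in> C - rel_interior C" using less.prems by auto
    then obtain F where F: "F facet_of C" "x \<in> F"
      using rel_boundary_of_polyhedron[OF polytope_imp_polyhedron[OF less.prems(1)]] by blast
    have Fp: "polytope F" using face_of_polytope_polytope less.prems(1) F(1) facet_of_imp_face_of by blast
    have "aff_dim F = aff_dim C - 1" "F \<noteq> {}" using F(1) by (auto simp: facet_of_def)
    moreover have "aff_dim F \<ge> 0" using \<open>F \<noteq> {}\<close> aff_dim_negative_iff[of F] by linarith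
    ultimately have "nat (aff_dim F) < nat (aff_dim C)" by linarith
    then obtain G where "G face_of F" "x \<in> rel_interior G" using less.hyps Fp F(2) by blast
    then show ?thesis using face_of_trans F(1) facet_of_imp_face_of by blast
  qed
qed

definition minface :: "'a::euclidean_space \<Rightarrow> 'a set \<Rightarrow> 'a set" where
  "minface r S = (SOME F. F face_of convex hull S \<and> r \<in> rel_interior F)"

lemma minface:
  fixes S :: "'a::euclidean_space set"
  assumes "finite S" "r \<in> convex hull S"
  shows "minface r S face_of convex hull S" "r \<in> rel_interior (minface r S)"
    "convex hull (S \<inter> minface r S) = minface r S"
proof -
  have "\<exists>F. F face_of convex hull S \<and> r \<in> rel_interior F"
    using exists_face_relint[OF polytope_convex_hull[OF assms(1)] assms(2)] .
  from someI_ex[OF this] show F: "minface r S face_of convex hull S" "r \<in> rel_interior (minface r S)"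
    unfolding minface_def by auto
  obtain S' where S': "S' \<subseteq> S" "minface r S = convex hull S'"
    using face_of_convex_hull_subset[OF finite_imp_compact[OF assms(1)] F(1)] by blast
  have "S' \<subseteq> convex hull S'" by (rule hull_subset)
  then have "S' \<subseteq> S \<inter> minface r S" using S' by auto
  then have "convex hull S' \<subseteq> convex hull (S \<inter> minface r S)" by (rule hull_mono)
  then have "minface r S \<subseteq> convex hull (S \<inter> minface r S)" using S'(2) by (simp only:)
  moreover have "convex hull (S \<inter> minface r S) \<subseteq> minface r S"
    using face_of_imp_convex[OF F(1)] by (rule hull_minimal[OF Int_lower2])
  ultimately show "convex hull (S \<inter> minface r S) = minface r S" by blast
qed

lemma minface_mono:
  fixes S :: "'a::euclidean_space set"
  assumes "finite T" "S \<subseteq> T" "r \<in> convex hull S"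
  shows "minface r S \<subseteq> minface r T"
proof -
  have fS: "finite S" using assms finite_subset by blast
  have rT: "r \<in> convex hull T" using hull_mono[OF assms(2)] assms(3) by blast
  have "minface r S \<subseteq> convex hull S" by (rule face_of_imp_subset[OF minface(1)[OF fS assms(3)]])
  also have "\<dots> \<subseteq> convex hull T" by (rule hull_mono[OF assms(2)])
  finally have C: "minface r S \<subseteq> convex hull T" .
  have "r \<in> minface r T" using minface(2)[OF assms(1) rT] rel_interior_subset by blast
  moreover have "r \<in> rel_interior (minface r S)" by (rule minface(2)[OF fS assms(3)])
  ultimately have "minface r T \<inter> rel_interior (minface r S) \<noteq> {}" by blast
  then show ?thesis by (rule subset_of_face_of[OF minface(1)[OF assms(1) rT] C])
qed

lemma minface_id:
  fixes S :: "'a::euclidean_space set"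
  assumes "finite S" "r \<in> rel_interior (convex hull S)"
  shows "S \<inter> minface r S = S"
proof -
  have rS: "r \<in> convex hull S" using assms(2) rel_interior_subset by blast
  have "r \<in> minface r S" using minface(2)[OF assms(1) rS] rel_interior_subset by blast
  then have "minface r S \<inter> rel_interior (convex hull S) \<noteq> {}" using assms(2) by blast
  then have "convex hull S \<subseteq> minface r S"
    by (rule subset_of_face_of[OF minface(1)[OF assms(1) rS] order_refl])
  moreover have "S \<subseteq> convex hull S" by (rule hull_subset)
  ultimately show ?thesis by blast
qed

theorem lemma1:
  fixes V :: "'a::euclidean_space set" and r :: 'a
  assumes "finite V"
  shows "order_complex_space (weak_balanced_poset V r)
           homotopy_equivalent_space order_complex_space (balanced_poset V r)"
proof (rule retract_hequiv[where f="\<lambda>S. S \<inter> minface r S"])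
  have "weak_balanced_poset V r \<subseteq> Pow V" unfolding weak_balanced_poset_def by auto
  then show "finite (weak_balanced_poset V r)" using assms by (simp add: finite_subset)
  show "balanced_poset V r \<subseteq> weak_balanced_poset V r"
  proof
    fix S assume "S \<in> balanced_poset V r"
    then have "S \<subseteq> V" "S \<noteq> V" "r \<in> rel_interior (convex hull S)"
      unfolding balanced_poset_def balanced_set_def by auto
    moreover have "rel_interior (convex hull S) \<subseteq> convex hull S" by (rule rel_interior_subset)
    ultimately show "S \<in> weak_balanced_poset V r"
      unfolding weak_balanced_poset_def weakly_balanced_def by blast
  qed
next
  fix S assume S: "S \<in> weak_balanced_poset V r"
  then have SV: "S \<subseteq> V" "S \<noteq> V" and rS: "r \<in> convex hull S"
    unfolding weak_balanced_poset_def weakly_balanced_def by auto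
  have fS: "finite S" using SV(1) assms finite_subset by blast
  show "S \<inter> minface r S \<subseteq> S" by blast
  have "S \<inter> minface r S \<noteq> V" using SV by blast
  moreover have "r \<in> rel_interior (convex hull (S \<inter> minface r S))"
    using minface(2,3)[OF fS rS] by simp
  ultimately show "S \<inter> minface r S \<in> balanced_poset V r"
    unfolding balanced_poset_def balanced_set_def using SV(1) by blast
next
  fix S T assume S: "S \<in> weak_balanced_poset V r" and T: "T \<in> weak_balanced_poset V r" and ST: "S \<subseteq> T"
  then have rS: "r \<in> convex hull S" and TV: "T \<subseteq> V"
    unfolding weak_balanced_poset_def weakly_balanced_def by auto
  have fT: "finite T" using TV assms finite_subset by blast
  show "S \<inter> minface r S \<subseteq> T \<inter> minface r T" using minface_mono[OF fT ST rS] ST by blast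
next
  fix S assume "S \<in> balanced_poset V r"
  then have "S \<subseteq> V" "r \<in> rel_interior (convex hull S)" unfolding balanced_poset_def balanced_set_def by auto
  moreover have "finite S" using \<open>S \<subseteq> V\<close> assms finite_subset by blast
  ultimately show "S \<inter> minface r S = S" using minface_id by blast
qed

end
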